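(* Let $k\ge2$ and $\ell\ge1$. The length of the longest strictly decreasing subsequence of the permutation $Z_k(\ell)$ is $(k+1)k^{\ell/2-1}-1$ if $\ell$ is even, and $2k^{(\ell-1)/2}-1$ if $\ell$ is odd.
   Context: $Z_k(\ell)$ is the permutation of $\{1,\dots,k^\ell\}$ whose $p$-th entry (for $p=1,\dots,k^\ell$) is $1+\mathrm{rev}_{k,\ell}(p-1)$, where $\mathrm{rev}_{k,\ell}(x)$ is the integer whose $\ell$-digit (zero-padded) base-$k$ representation is the reversal of that of $x$. Equivalently, $Z_k(\ell)$ is the stable configuration (read left to right on layer $\ell+1$) of labeled chip-firing on the infinite rooted directed $k$-ary tree starting from chips $1,\dots,k^\ell$ at the root, under the strategy where each vertex holding chips $c_1<\cdots<c_{kq}$ fires the consecutive $k$-tuples $(c_1,\dots,c_k),(c_{k+1},\dots,c_{2k}),\dots$; in a firing the $i$-th smallest chip of the fired $k$-tuple goes to the $i$-th leftmost child. *)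

theory Defs
  imports Main "HOL-Library.Sublist"
begin

text \<open>Digit reversal: the integer whose l-digit (zero-padded) base-k representation
  is the reversal of that of x (digit i of x is (x div k^i) mod k).\<close>
definition rev_digits :: "nat \<Rightarrow> nat \<Rightarrow> nat \<Rightarrow> nat" where
  "rev_digits k l x = (\<Sum>i<l. ((x div k ^ i) mod k) * k ^ (l - 1 - i))"

definition Zperm :: "nat \<Rightarrow> nat \<Rightarrow> nat list" where
  "Zperm k l = map (\<lambda>p. 1 + rev_digits k l (p - 1)) [1..<k ^ l + 1]"

definition lds :: "nat list \<Rightarrow> nat" where
  "lds xs = Max {length ys | ys. subseq ys xs \<and> sorted_wrt (>) ys}"

end

theory Submission
  imports Defs
begin

lemma rev_0 [simp]: "rev_digits k 0 x = 0"
  by (simp add: rev_digits_def)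

lemma rev_Suc: "rev_digits k (Suc n) x = (x mod k) * k^n + rev_digits k n (x div k)"
  unfolding rev_digits_def
  by (simp add: sum.lessThan_Suc_shift div_mult2_eq del: sum.lessThan_Suc)

lemma lt_mult_add: "(a::nat) < k \<Longrightarrow> r < Q \<Longrightarrow> a * Q + r < k * Q"
proof -
  assume "a < k" "r < Q"
  then have "a * Q + r < (a+1) * Q" by simp
  also have "\<dots> \<le> k * Q" using \<open>a<k\<close> by (intro mult_right_mono) auto
  finally show ?thesis .
qed

lemma rev_lt: "0 < k \<Longrightarrow> rev_digits k n x < k^n"
proof (induction n arbitrary: x)
  case 0 then show ?case by simp
next
  case (Suc n)
  have "x mod k < k" using Suc.prems by simp
  then have "(x mod k) * k^n + rev_digits k n (x div k) < k * k^n"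
    using Suc by (intro lt_mult_add) auto
  then show ?case by (simp add: rev_Suc)
qed

lemma rev_split: "0 < k \<Longrightarrow> r < k^m \<Longrightarrow>
   rev_digits k (m+n) (a*k^m + r) = rev_digits k m r * k^n + rev_digits k n a"
proof (induction m arbitrary: r)
  case 0 then show ?case by simp
next
  case (Suc m)
  have e1: "(a*k^Suc m + r) mod k = r mod k"
  proof -
    have h: "a*k^Suc m + r = r + (a*k^m) * k" by (simp add: algebra_simps)
    show ?thesis by (simp only: h mod_mult_self1)
  qed
  have e2: "(a*k^Suc m + r) div k = a*k^m + r div k"
  proof -
    have h: "a*k^Suc m + r = r + (a*k^m) * k" by (simp add: algebra_simps)
    show ?thesis using Suc.prems by (simp only: h div_mult_self1)
  qed
  have "r div k < k^m" using Suc.prems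
    by (simp add: div_less_iff_less_mult mult.commute)
  then have ih: "rev_digits k (m+n) (a*k^m + r div k) = rev_digits k m (r div k) * k^n + rev_digits k n a"
    using Suc by blast
  have "rev_digits k (Suc m + n) (a*k^Suc m + r) = ((a*k^Suc m + r) mod k) * k^(m+n) + rev_digits k (m+n) ((a*k^Suc m + r) div k)"
    by (simp add: rev_Suc)
  also have "\<dots> = (r mod k) * k^(m+n) + rev_digits k (m+n) (a*k^m + r div k)" by (simp only: e1 e2)
  also have "\<dots> = rev_digits k (Suc m) r * k^n + rev_digits k n a"
    by (subst ih) (simp add: rev_Suc algebra_simps power_add)
  finally show ?case .
qed

lemma rev_1: "rev_digits k (Suc 0) c = c mod k"
  using rev_Suc[of k 0 c] by simp

lemma rev_inv: "0 < k \<Longrightarrow> x < k^n \<Longrightarrow> rev_digits k n (rev_digits k n x) = x"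
proof (induction n arbitrary: x)
  case 0 then show ?case by simp
next
  case (Suc n)
  have lt: "x div k < k^n" using Suc.prems
    by (simp add: div_less_iff_less_mult mult.commute)
  have "rev_digits k (Suc n) (rev_digits k (Suc n) x)
      = rev_digits k (n+1) ((x mod k) * k^n + rev_digits k n (x div k))"
    by (simp add: rev_Suc)
  also have "\<dots> = rev_digits k n (rev_digits k n (x div k)) * k^1 + rev_digits k 1 (x mod k)"
    by (rule rev_split) (use Suc rev_lt in auto)
  also have "\<dots> = x" using Suc lt by (simp add: rev_1)
  finally show ?case .
qed

lemma RV: "0<k \<Longrightarrow> c<k \<Longrightarrow> s<k^N \<Longrightarrow>
  rev_digits k (N+1+P) (A*k^(N+1) + (c*k^N + s)) = rev_digits k N s * k^(P+1) + (c*k^P + rev_digits k P A)"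
proof -
  assume k: "0<k" and c: "c<k" and s: "s<k^N"
  have r: "c*k^N + s < k^(N+1)" using lt_mult_add[OF c s] by (simp add: mult.commute)
  have "rev_digits k (N+1+P) (A*k^(N+1) + (c*k^N + s)) = rev_digits k (N+1) (c*k^N + s) * k^P + rev_digits k P A"
    by (rule rev_split[OF k r])
  also have "rev_digits k (N+1) (c*k^N + s) = rev_digits k N s * k^1 + rev_digits k 1 c"
    by (rule rev_split[OF k s])
  finally show ?thesis using c by (simp add: rev_1 algebra_simps power_add)
qed

lemma subseq_map_ex: "subseq ys (map f xs) \<Longrightarrow> \<exists>zs. subseq zs xs \<and> ys = map f zs"
proof (induction xs arbitrary: ys)
  case Nil then show ?case by auto
next
  case (Cons x xs)
  show ?case
  proof (cases ys)
    case Nil then show ?thesis by auto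
  next
    case (Cons y ys')
    show ?thesis
    proof (cases "y = f x")
      case True
      with Cons Cons.prems have "subseq ys' (map f xs)" by simp
      then obtain zs where "subseq zs xs" "ys' = map f zs" using Cons.IH by blast
      then show ?thesis using True Cons by (intro exI[of _ "x#zs"]) auto
    next
      case False
      with Cons Cons.prems have "subseq ys (map f xs)" by simp
      then obtain zs where "subseq zs xs" "ys = map f zs" using Cons.IH by blast
      then show ?thesis by (intro exI[of _ zs]) auto
    qed
  qed
qed

lemma sorted_wrt_subseq: "subseq xs ys \<Longrightarrow> sorted_wrt R ys \<Longrightarrow> sorted_wrt R xs"
proof (induction rule: list_emb.induct)
  case (list_emb_Nil ys) then show ?case by simp
next
  case (list_emb_Cons xs ys y) then show ?case by simp
next
  case (list_emb_Cons2 x y xs ys)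
  then show ?case using list_emb_set[of "(=)" xs ys] by fastforce
qed

lemma chain_sorted:
  assumes step: "\<And>t. Suc t < T \<Longrightarrow> R (f t) (f (Suc t))" and tr: "transp R"
  shows "sorted_wrt R (map f [0..<T])"
proof -
  have "\<And>i j. i < j \<Longrightarrow> j < T \<Longrightarrow> R (f i) (f j)"
  proof -
    fix i j show "i < j \<Longrightarrow> j < T \<Longrightarrow> R (f i) (f j)"
    proof (induction j)
      case 0 then show ?case by simp
    next
      case (Suc j)
      show ?case
      proof (cases "i = j")
        case True then show ?thesis using step Suc by simp
      next
        case False
        then have "R (f i) (f j)" using Suc by simp
        moreover have "R (f j) (f (Suc j))" using step Suc by simp
        ultimately show ?thesis using tr by (meson transpE)
      qed
    qed
  qed
  then show ?thesis by (auto simp: sorted_wrt_iff_nth_less)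
qed

lemma Zperm_alt: "Zperm k l = map (\<lambda>p. 1 + rev_digits k l p) [0..<k^l]"
  unfolding Zperm_def by (simp add: map_Suc_upt[symmetric] del: upt_Suc)

lemma lt2: "(c'::nat) < c \<Longrightarrow> s' < Q \<Longrightarrow> c'*Q + s' < c*Q + s"
proof -
  assume a: "c' < c" "s' < Q"
  have "c'*Q + s' < Suc c' * Q" using a by simp
  also have "\<dots> \<le> c*Q" using a by (intro mult_right_mono) auto
  finally show ?thesis by simp
qed

lemma divh: "W < Q \<Longrightarrow> ((X::nat)*Q + W) div Q = X"
  by (metis add.commute add_cancel_right_right div_less div_mult_self1 less_zeroE mult_eq_0_iff)

lemma decomp:
  assumes k: "0<k" and l: "l = N+1+P"
  shows "\<exists>A c s. p = A*k^(N+1) + (c*k^N + s) \<and> c<k \<and> s<k^N \<and> A = p div k^(N+1) \<and>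
     rev_digits k l p = rev_digits k N s * k^(P+1) + (c*k^P + rev_digits k P A) \<and>
     rev_digits k l p div k^(P+1) = rev_digits k N s"
proof -
  define A where "A = p div k^(N+1)"
  define c where "c = p mod k^(N+1) div k^N"
  define s where "s = p mod k^N"
  have kN: "k^N > 0" using k by simp
  have dv: "k^N dvd k^(N+1)" by (simp add: le_imp_power_dvd)
  have "p mod k^(N+1) = (p mod k^(N+1)) div k^N * k^N + (p mod k^(N+1)) mod k^N"
    by (rule div_mult_mod_eq[symmetric])
  also have "(p mod k^(N+1)) mod k^N = p mod k^N" by (rule mod_mod_cancel[OF dv])
  finally have pm: "p mod k^(N+1) = c * k^N + s" unfolding c_def s_def .
  have "p = p div k^(N+1) * k^(N+1) + p mod k^(N+1)" by (rule div_mult_mod_eq[symmetric])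
  then have p: "p = A*k^(N+1) + (c*k^N + s)" unfolding A_def pm .
  have c: "c < k" unfolding c_def using k
    by (simp add: div_less_iff_less_mult mult.commute)
  have s: "s < k^N" unfolding s_def using kN by simp
  have r: "rev_digits k l p = rev_digits k N s * k^(P+1) + (c*k^P + rev_digits k P A)"
    using RV[OF k c s, of P A] p l by simp
  have w: "c*k^P + rev_digits k P A < k^(P+1)"
    using lt_mult_add[OF c rev_lt[OF k, of P A]] by (simp add: mult.commute)
  have "rev_digits k l p div k^(P+1) = rev_digits k N s"
    unfolding r by (rule divh[OF w])
  then show ?thesis using p c s r A_def by blast
qed

lemma key_mono:
  assumes k: "0<k" and l: "l = N+1+P" and pp: "p < p'" and rr: "rev_digits k l p' < rev_digits k l p"
  shows "p div k^(N+1) + rev_digits k l p' div k^(P+1) < p' div k^(N+1) + rev_digits k l p div k^(P+1)"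
proof -
  obtain A c s where d: "p = A*k^(N+1) + (c*k^N + s)" "c<k" "s<k^N" "A = p div k^(N+1)"
     "rev_digits k l p = rev_digits k N s * k^(P+1) + (c*k^P + rev_digits k P A)"
     "rev_digits k l p div k^(P+1) = rev_digits k N s"
    using decomp[OF k l] by blast
  obtain A' c' s' where d': "p' = A'*k^(N+1) + (c'*k^N + s')" "c'<k" "s'<k^N" "A' = p' div k^(N+1)"
     "rev_digits k l p' = rev_digits k N s' * k^(P+1) + (c'*k^P + rev_digits k P A')"
     "rev_digits k l p' div k^(P+1) = rev_digits k N s'"
    using decomp[OF k l] by blast
  have AA: "A \<le> A'" using d(4) d'(4) pp by (simp add: div_le_mono)
  have BB: "rev_digits k N s' \<le> rev_digits k N s"
    using div_le_mono[OF less_imp_le[OF rr], of "k^(P+1)"] d(6) d'(6) by simp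
  have "\<not> (A = A' \<and> rev_digits k N s' = rev_digits k N s)"
  proof
    assume e: "A = A' \<and> rev_digits k N s' = rev_digits k N s"
    have "c'*k^P + rev_digits k P A < c*k^P + rev_digits k P A"
      using rr d(5) d'(5) e by simp
    then have "c'*k^P < c*k^P" by simp
    then have "c' < c" using mult_less_cancel2 by blast
    then have "c'*k^N + s' < c*k^N + s" using lt2 d'(3) by blast
    then have "p' < p" using d(1) d'(1) e by simp
    then show False using pp by simp
  qed
  then show ?thesis using AA BB d(4,6) d'(4,6) by auto
qed

lemma upper:
  assumes k: "0<k" and l: "l = N+1+P" and sub: "subseq ys (Zperm k l)" and srt: "sorted_wrt (>) ys"
  shows "length ys \<le> k^P + k^N - 1"
proof -
  define g where "g = (\<lambda>p. 1 + rev_digits k l p)"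
  have "subseq ys (map g [0..<k^l])" using sub unfolding Zperm_alt g_def .
  then obtain zs where zs: "subseq zs [0..<k^l]" "ys = map g zs"
    using subseq_map_ex by blast
  have s1: "sorted_wrt (<) zs" using sorted_wrt_subseq[OF zs(1)] by (simp add: sorted_wrt_upt)
  have s2: "sorted_wrt (\<lambda>a b. g b < g a) zs" using srt zs(2) by (simp add: sorted_wrt_map)
  have setz: "set zs \<subseteq> {..<k^l}"
  proof
    fix x assume "x \<in> set zs"
    then obtain y where "y \<in> set [0..<k^l]" "x = y" using list_emb_set[OF zs(1)] by blast
    then show "x \<in> {..<k^l}" by simp
  qed
  define key where "key = (\<lambda>p. p div k^(N+1) + (k^N - 1 - rev_digits k l p div k^(P+1)))"
  have revb: "rev_digits k l p div k^(P+1) \<le> k^N - 1" for p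
  proof -
    have e: "k^l = k^(P+1) * k^N" unfolding l by (simp add: power_add)
    have "rev_digits k l p < k^(P+1) * k^N" using rev_lt[OF k, of l p] unfolding e .
    then have "rev_digits k l p div k^(P+1) < k^N" by (simp add: div_less_iff_less_mult mult.commute k)
    then show ?thesis by simp
  qed
  have s3: "sorted_wrt (<) (map key zs)"
    unfolding sorted_wrt_map
  proof (rule sorted_wrt_mono_rel[of _ "\<lambda>a b. a < b \<and> g b < g a"])
    show "sorted_wrt (\<lambda>a b. a < b \<and> g b < g a) zs"
      using s1 s2 unfolding sorted_wrt_iff_nth_less by simp
  next
    fix x y assume "x < y \<and> g y < g x"
    then have "x div k^(N+1) + rev_digits k l y div k^(P+1) < y div k^(N+1) + rev_digits k l x div k^(P+1)"
    proof -
      have "x < y" "rev_digits k l y < rev_digits k l x" using \<open>x < y \<and> g y < g x\<close> unfolding g_def by auto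
      then show ?thesis by (rule key_mono[OF k l])
    qed
    then show "key x < key y" unfolding key_def using revb[of x] revb[of y] by linarith
  qed
  have keyb: "key p < k^P + k^N - 1" if "p < k^l" for p
  proof -
    have e: "k^l = k^P * k^(N+1)" unfolding l by (simp add: power_add)
    have "p < k^P * k^(N+1)" using that unfolding e .
    then have "p div k^(N+1) < k^P" by (simp add: div_less_iff_less_mult k)
    moreover have "k^N \<ge> 1" using k by simp
    ultimately show ?thesis unfolding key_def using revb[of p] by linarith
  qed
  have "set (map key zs) \<subseteq> {..<k^P + k^N - 1}" using setz keyb by auto
  then have "card (set (map key zs)) \<le> k^P + k^N - 1"
    using card_mono[OF finite_lessThan] by fastforce
  moreover have "distinct (map key zs)" using s3 by (simp add: strict_sorted_iff)
  ultimately show ?thesis using zs(2) distinct_card[of "map key zs"] by simp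
qed

lemma dm: "r < (n::nat) \<Longrightarrow> (q*n + r) div n = q \<and> (q*n + r) mod n = r"
  by auto

lemma lower:
  assumes k2: "2 \<le> k" and l: "l = N+1+P" and PN: "P = N \<or> P = Suc N"
  shows "\<exists>ys. subseq ys (Zperm k l) \<and> sorted_wrt (>) ys \<and> length ys = k^P + k^N - 1"
proof -
  have k: "0 < k" using k2 by simp
  define M where "M = k^N"
  define K where "K = k^(P-N)"
  have M1: "M \<ge> 1" unfolding M_def using k by simp
  have KK: "K = 1 \<or> (K = k \<and> P = Suc N)" unfolding K_def using PN by auto
  have K1: "K \<ge> 1" and Kk: "K \<le> k" using KK k2 by auto
  have MK: "M * K = k^P" unfolding M_def K_def using PN by auto
  define T where "T = M*(K+1) - 1"
  have T: "T = k^P + k^N - 1" unfolding T_def using MK M_def by (simp add: algebra_simps)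
  define j where "j t = t div (K+1)" for t
  define e where "e t = t mod (K+1)" for t
  define A where "A t = j t * K + e t" for t
  define c where "c t = (if e t = K then 0 else k - 1 - e t)" for t
  define B where "B t = M - 1 - j t" for t
  define pos where "pos t = A t * k^(N+1) + (c t * k^N + rev_digits k N (B t))" for t
  have te: "t = j t * (K+1) + e t" for t unfolding j_def e_def by (rule div_mult_mod_eq[symmetric])
  have eK: "e t \<le> K" for t unfolding e_def
    using mod_less_divisor[of "K+1" t] by simp
  have cb: "c t < k" for t unfolding c_def using k eK[of t] by auto
  have jb: "j t < M" if "t < T" for t
  proof -
    have "t < M*(K+1)" using that unfolding T_def by simp
    then show ?thesis unfolding j_def by (simp add: div_less_iff_less_mult)
  qed
  have Bb: "B t < M" for t unfolding B_def using M1 by simp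
  have Ab: "A t < k^P" if "t < T" for t
  proof (cases "e t = K")
    case True
    have "(Suc (j t)) * (K+1) = Suc t" using te[of t] True by simp
    also have "Suc t < M * (K+1)" using that unfolding T_def using M1 K1 by simp
    finally have "Suc (j t) * (K+1) < M * (K+1)" .
    then have "Suc (j t) < M" using mult_less_cancel2 by blast
    then have "Suc (j t) * K < M * K" using K1 by (intro mult_strict_right_mono) auto
    then show ?thesis unfolding A_def using True MK by simp
  next
    case False
    then have "e t < K" using eK[of t] by simp
    then have "A t < Suc (j t) * K" unfolding A_def by simp
    also have "\<dots> \<le> M * K" using jb[OF that] by (intro mult_right_mono) auto
    finally show ?thesis using MK by simp
  qed
  have posb: "pos t < k^l" if "t < T" for t
  proof -
    have "c t * k^N + rev_digits k N (B t) < k * k^N"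
      using lt_mult_add[OF cb rev_lt[OF k]] .
    then have "pos t < Suc (A t) * k^(N+1)" unfolding pos_def by simp
    also have "\<dots> \<le> k^P * k^(N+1)" using Ab[OF that] by (intro mult_right_mono) auto
    also have "\<dots> = k^l" unfolding l by (simp add: power_add)
    finally show ?thesis .
  qed
  have val: "rev_digits k l (pos t) = B t * k^(P+1) + (c t * k^P + rev_digits k P (A t))" for t
  proof -
    have "B t < k^N" using Bb[of t] unfolding M_def .
    then have "rev_digits k N (rev_digits k N (B t)) = B t" by (rule rev_inv[OF k])
    moreover have "rev_digits k (N+1+P) (A t * k^(N+1) + (c t * k^N + rev_digits k N (B t))) = rev_digits k N (rev_digits k N (B t)) * k^(P+1) + (c t * k^P + rev_digits k P (A t))"
      by (rule RV[OF k cb rev_lt[OF k]])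
    ultimately show ?thesis unfolding pos_def l by simp
  qed
  have step: "pos t < pos (Suc t) \<and> rev_digits k l (pos (Suc t)) < rev_digits k l (pos t)"
    if st: "Suc t < T" for t
  proof (cases "e t = K")
    case False
    then have el: "e t < K" using eK[of t] by simp
    have ts: "Suc t = j t * (K+1) + Suc (e t)" using te[of t] by simp
    have "Suc t div (K+1) = j t \<and> Suc t mod (K+1) = Suc (e t)"
      using dm[of "Suc (e t)" "K+1" "j t"] el unfolding ts[symmetric] by simp
    then have js: "j (Suc t) = j t" and es: "e (Suc t) = Suc (e t)"
      using j_def[of "Suc t"] e_def[of "Suc t"] by simp_all
    have As: "A (Suc t) = Suc (A t)" unfolding A_def js es by simp
    have Bs: "B (Suc t) = B t" unfolding B_def js ..
    have X: "c t * k^N + rev_digits k N (B t) < k^(N+1)"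
      using lt_mult_add[OF cb rev_lt[OF k]] by simp
    have p1: "pos t < pos (Suc t)" unfolding pos_def As Bs using X by simp
    have "c (Suc t) * k^P + rev_digits k P (A (Suc t)) < c t * k^P + rev_digits k P (A t)"
    proof (cases "c (Suc t) < c t")
      case True
      then show ?thesis using lt2 rev_lt[OF k] by blast
    next
      case False
      have eK1: "Suc (e t) = K" using False el unfolding c_def es using Kk by (auto split: if_splits)
      then have c0: "c (Suc t) = 0" unfolding c_def es by simp
      then have "c t = 0" using False by simp
      then have "K = k" unfolding c_def using el eK1 Kk by auto
      then have PS: "P = Suc N" and Kk': "K = k" using KK k2 by auto
      have Am: "A t mod k = k - 1" "A t div k = j t" unfolding A_def Kk'[symmetric]
        using eK1 el dm[of "e t" K "j t"] by simp_all
      have sa: "Suc (A t) = Suc (j t) * k + 0" unfolding A_def Kk'[symmetric] using eK1 by simp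
      have Am2: "Suc (A t) div k = Suc (j t)" "Suc (A t) mod k = 0"
        unfolding sa using dm[of 0 k "Suc (j t)"] k by simp_all
      have "rev_digits k P (A (Suc t)) = rev_digits k N (Suc (j t))"
        unfolding As PS rev_Suc Am2 by simp
      also have "\<dots> < k^N" by (rule rev_lt[OF k])
      also have "\<dots> \<le> (k-1) * k^N" using k2 by simp
      also have "\<dots> \<le> rev_digits k P (A t)" unfolding PS rev_Suc Am by simp
      finally show ?thesis using c0 \<open>c t = 0\<close> by simp
    qed
    then have p2: "rev_digits k l (pos (Suc t)) < rev_digits k l (pos t)" unfolding val Bs by simp
    show ?thesis using p1 p2 by simp
  next
    case True
    have aux: "Suc t' = Suc q * (K+1) + 0" if "t' = q*(K+1)+K" for t' q using that by simp
    have ts: "Suc t = Suc (j t) * (K+1) + 0" using aux[of t "j t"] te[of t] True by metis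
    have "Suc t div (K+1) = Suc (j t) \<and> Suc t mod (K+1) = 0"
      using dm[of 0 "K+1" "Suc (j t)"] unfolding ts[symmetric] by simp
    then have js: "j (Suc t) = Suc (j t)" and es: "e (Suc t) = 0"
      using j_def[of "Suc t"] e_def[of "Suc t"] by simp_all
    have As: "A (Suc t) = A t" unfolding A_def js es True by simp
    have "Suc (j t) * (K+1) < M * (K+1)" using ts st unfolding T_def by simp
    then have jM: "Suc (j t) < M" using mult_less_cancel2 by blast
    have Bs: "B t = Suc (B (Suc t))" unfolding B_def js using jM by simp
    have c0: "c t = 0" unfolding c_def using True by simp
    have c1: "c (Suc t) = k - 1" unfolding c_def es using K1 by simp
    have "rev_digits k N (B t) < k^N" by (rule rev_lt[OF k])
    also have "k^N \<le> (k-1) * k^N" using k2 by simp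
    finally have p1: "pos t < pos (Suc t)" unfolding pos_def As c0 c1 by simp
    have "(k-1) * k^P < k * k^P" using k by simp
    then have p2: "rev_digits k l (pos (Suc t)) < rev_digits k l (pos t)"
      unfolding val As c0 c1 Bs by simp
    show ?thesis using p1 p2 by simp
  qed
  define g where "g = (\<lambda>p. 1 + rev_digits k l p)"
  define ps where "ps = map pos [0..<T]"
  have s1: "sorted_wrt (<) ps" unfolding ps_def
    by (rule chain_sorted) (use step in \<open>auto simp: transp_def\<close>)
  have s2: "sorted_wrt (>) (map g ps)" unfolding ps_def map_map
    by (rule chain_sorted) (use step in \<open>auto simp: transp_def g_def\<close>)
  have "subseq ps [0..<k^l]"
    by (rule sorted_subset_imp_subseq) (use s1 posb in \<open>auto simp: ps_def\<close>)
  then have "subseq (map g ps) (Zperm k l)" unfolding Zperm_alt g_def by (rule subseq_map)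
  then show ?thesis using s2 T by (intro exI[of _ "map g ps"]) (simp add: ps_def)
qed

theorem theorem7p3:
  fixes k l :: nat
  assumes "k \<ge> 2" and "l \<ge> 1"
  shows "lds (Zperm k l) =
           (if even l then (k + 1) * k ^ (l div 2 - 1) - 1
            else 2 * k ^ ((l - 1) div 2) - 1)"
proof -
  define P where "P = l div 2"
  define N where "N = (l - 1) div 2"
  have l: "l = N+1+P" unfolding P_def N_def using assms(2) by presburger
  have PN: "P = N \<or> P = Suc N" unfolding P_def N_def using assms(2) by presburger
  have k: "0 < k" using assms(1) by simp
  define S where "S = {length ys | ys. subseq ys (Zperm k l) \<and> sorted_wrt (>) ys}"
  have ub: "x \<le> k^P + k^N - 1" if "x \<in> S" for x
    using that upper[OF k l] unfolding S_def by blast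
  have fin: "finite S" using ub by (meson finite_atMost finite_subset subsetI atMost_iff)
  have mem: "k^P + k^N - 1 \<in> S" using lower[OF assms(1) l PN] unfolding S_def by (metis (mono_tags, lifting) mem_Collect_eq)
  have "lds (Zperm k l) = k^P + k^N - 1"
    unfolding lds_def S_def[symmetric] by (rule Max_eqI[OF fin ub mem])
  also have "\<dots> = (if even l then (k + 1) * k ^ (l div 2 - 1) - 1
            else 2 * k ^ ((l - 1) div 2) - 1)"
  proof (cases "even l")
    case True
    then obtain m where m: "l = 2*m" by blast
    then have "m \<ge> 1" using assms(2) by simp
    then obtain m' where m': "m = Suc m'" by (cases m) auto
    have "P = Suc m'" "N = m'" unfolding P_def N_def using m m' by simp_all
    then show ?thesis using True m m' by (simp add: algebra_simps)
  next
    case False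
    then have "P = N" unfolding P_def N_def by presburger
    then show ?thesis using False N_def by (simp add: mult_2)
  qed
  finally show ?thesis .
qed

end
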